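(* Let $(V,h)$ and $(V',h')$ be finite-dimensional $\epsilon$-hermitian spaces with respect to $(F,\rho)$, let $n$ be a positive integer, let $\Lambda$ be a self-dual lattice sequence in $(V,h)$, and let $f:V\to V'$ be an $F$-linear isomorphism such that the lattice sequence $f(\Lambda):s\mapsto f(\Lambda_s)$ is self-dual in $(V',h')$ and $$\sigma_{h,h'}(f)\in\tilde{\mathrm U}^n(\Lambda)\,f^{-1}\,\tilde{\mathrm U}^n(f(\Lambda)).$$ Then there is an isometry $\phi:(V,h)\to(V',h')$ of $\epsilon$-hermitian spaces contained in $\tilde{\mathrm U}^n(f(\Lambda))\,f\,\tilde{\mathrm U}^n(\Lambda)$.
   Context: $F$ is a nonarchimedean local field of odd residual characteristic (valuation ring $o_F$, maximal ideal $\mathfrak p_F$), $\rho$ an automorphism of $F$ with $\rho^2=\mathrm{id}$, $\epsilon\in\{\pm1\}$. An $\epsilon$-hermitian space w.r.t. $(F,\rho)$ is a finite-dimensional right $F$-vector space with nondegenerate biadditive $h$ satisfying $h(v_1x,v_2y)=\rho(x)\epsilon\rho(h(v_2,v_1))y$. An $o_F$-lattice sequence $\Lambda$ in $V$ is a map from $\mathbb Z$ to full-rank $o_F$-lattices in $V$, decreasing ($\Lambda_s\subseteq\Lambda_t$ for $s>t$), with $\Lambda_s\pi=\Lambda_{s+e}$ for some fixed $e\ge1$ and a uniformizer $\pi$; $M^{\#}=\{v:h(v,M)\subseteq\mathfrak p_F\}$, and $\Lambda$ is self-dual if $(\Lambda_s)^{\#}=\Lambda_{u-s}$ for some $u$ and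 all $s$. For a lattice sequence $\Lambda$ in $V$, $\mathfrak a_n(\Lambda)=\{a\in\mathrm{End}_F(V): a\Lambda_s\subseteq\Lambda_{s+n}\ \forall s\}$ and $\tilde{\mathrm U}^n(\Lambda)=1+\mathfrak a_n(\Lambda)$ for $n\ge1$. For $f\in\mathrm{Hom}_F(V,V')$, $\sigma_{h,h'}(f)\in\mathrm{Hom}_F(V',V)$ is defined by $h'(f(v),w)=h(v,\sigma_{h,h'}(f)(w))$ for all $v\in V$, $w\in V'$. *)

theory Defs
  imports Complex_Main
begin

text \<open>A normalized discrete valuation on a field, given by its values on nonzero
  elements (the value at 0, i.e. +infinity, is never used).\<close>
definition discrete_valuation :: "('a::field \<Rightarrow> int) \<Rightarrow> bool" where
  "discrete_valuation v \<longleftrightarrow>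
     (\<forall>x y. x \<noteq> 0 \<longrightarrow> y \<noteq> 0 \<longrightarrow> v (x * y) = v x + v y) \<and>
     (\<forall>x y. x \<noteq> 0 \<longrightarrow> y \<noteq> 0 \<longrightarrow> x + y \<noteq> 0 \<longrightarrow> v (x + y) \<ge> min (v x) (v y)) \<and>
     (\<exists>p. p \<noteq> 0 \<and> v p = 1)"

definition val_ge :: "('a::field \<Rightarrow> int) \<Rightarrow> int \<Rightarrow> 'a set" where
  "val_ge v k = {x. x = 0 \<or> v x \<ge> k}"

abbreviation val_ring :: "('a::field \<Rightarrow> int) \<Rightarrow> 'a set" where
  "val_ring v \<equiv> val_ge v 0"

abbreviation val_ideal :: "('a::field \<Rightarrow> int) \<Rightarrow> 'a set" where
  "val_ideal v \<equiv> val_ge v 1"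

definition val_complete :: "('a::field \<Rightarrow> int) \<Rightarrow> bool" where
  "val_complete v \<longleftrightarrow>
     (\<forall>x :: nat \<Rightarrow> 'a.
        (\<forall>k. \<exists>N. \<forall>m\<ge>N. \<forall>m'\<ge>N. x m - x m' \<in> val_ge v k) \<longrightarrow>
        (\<exists>L. \<forall>k. \<exists>N. \<forall>m\<ge>N. x m - L \<in> val_ge v k))"

definition finite_residue_field :: "('a::field \<Rightarrow> int) \<Rightarrow> bool" where
  "finite_residue_field v \<longleftrightarrow>
     (\<exists>S. finite S \<and> S \<subseteq> val_ring v \<and> (\<forall>x\<in>val_ring v. \<exists>s\<in>S. x - s \<in> val_ideal v))"

definition nonarch_local_field :: "('a::field \<Rightarrow> int) \<Rightarrow> bool" where
  "nonarch_local_field v \<longleftrightarrow> discrete_valuation v \<and> val_complete v \<and> finite_residue_field v"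

text \<open>Residue characteristic is odd iff 2 is not in the maximal ideal.\<close>
definition odd_residual_char :: "('a::field \<Rightarrow> int) \<Rightarrow> bool" where
  "odd_residual_char v \<longleftrightarrow> (2::'a) \<notin> val_ideal v"

definition field_automorphism :: "('a::field \<Rightarrow> 'a) \<Rightarrow> bool" where
  "field_automorphism r \<longleftrightarrow> bij r \<and> (\<forall>x y. r (x + y) = r x + r y) \<and>
     (\<forall>x y. r (x * y) = r x * r y) \<and> r 1 = 1"

definition finite_dim_space :: "('a::field \<Rightarrow> 'v::ab_group_add \<Rightarrow> 'v) \<Rightarrow> bool" where
  "finite_dim_space sc \<longleftrightarrow> vector_space sc \<and> (\<exists>B. finite B \<and> module.span sc B = UNIV)"

definition eps_hermitian ::
  "('a::field \<Rightarrow> 'a) \<Rightarrow> 'a \<Rightarrow> ('a \<Rightarrow> 'v::ab_group_add \<Rightarrow> 'v) \<Rightarrow> ('v \<Rightarrow> 'v \<Rightarrow> 'a) \<Rightarrow> bool" where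
  "eps_hermitian r eps sc h \<longleftrightarrow>
     (\<forall>v1 v2 w. h (v1 + v2) w = h v1 w + h v2 w) \<and>
     (\<forall>v w1 w2. h v (w1 + w2) = h v w1 + h v w2) \<and>
     (\<forall>v1 v2 x y. h (sc x v1) (sc y v2) = r x * eps * r (h v2 v1) * y) \<and>
     (\<forall>v. (\<forall>w. h v w = 0) \<longrightarrow> v = 0)"

definition o_span :: "('a::field \<Rightarrow> int) \<Rightarrow> ('a \<Rightarrow> 'v::ab_group_add \<Rightarrow> 'v) \<Rightarrow> 'v set \<Rightarrow> 'v set" where
  "o_span v sc S = {y. \<exists>c. (\<forall>b\<in>S. c b \<in> val_ring v) \<and> y = (\<Sum>b\<in>S. sc (c b) b)}"

definition o_lattice :: "('a::field \<Rightarrow> int) \<Rightarrow> ('a \<Rightarrow> 'v::ab_group_add \<Rightarrow> 'v) \<Rightarrow> 'v set \<Rightarrow> bool" where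
  "o_lattice v sc L \<longleftrightarrow> (\<exists>S. finite S \<and> module.span sc S = UNIV \<and> L = o_span v sc S)"

definition lattice_sequence ::
  "('a::field \<Rightarrow> int) \<Rightarrow> ('a \<Rightarrow> 'v::ab_group_add \<Rightarrow> 'v) \<Rightarrow> (int \<Rightarrow> 'v set) \<Rightarrow> bool" where
  "lattice_sequence v sc Lam \<longleftrightarrow>
     (\<forall>s. o_lattice v sc (Lam s)) \<and>
     (\<forall>s t. s > t \<longrightarrow> Lam s \<subseteq> Lam t) \<and>
     (\<exists>e::int. e \<ge> 1 \<and> (\<exists>p. p \<noteq> 0 \<and> v p = 1 \<and> (\<forall>s. sc p ` Lam s = Lam (s + e))))"

definition lattice_dual ::
  "('a::field \<Rightarrow> int) \<Rightarrow> ('v \<Rightarrow> 'v \<Rightarrow> 'a) \<Rightarrow> 'v set \<Rightarrow> 'v set" where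
  "lattice_dual v h M = {x. \<forall>m\<in>M. h x m \<in> val_ideal v}"

definition self_dual_lattice_sequence ::
  "('a::field \<Rightarrow> int) \<Rightarrow> ('a \<Rightarrow> 'v::ab_group_add \<Rightarrow> 'v) \<Rightarrow> ('v \<Rightarrow> 'v \<Rightarrow> 'a) \<Rightarrow> (int \<Rightarrow> 'v set) \<Rightarrow> bool" where
  "self_dual_lattice_sequence v sc h Lam \<longleftrightarrow>
     lattice_sequence v sc Lam \<and> (\<exists>u. \<forall>s. lattice_dual v h (Lam s) = Lam (u - s))"

definition a_n :: "('a::field \<Rightarrow> 'v::ab_group_add \<Rightarrow> 'v) \<Rightarrow> (int \<Rightarrow> 'v set) \<Rightarrow> int \<Rightarrow> ('v \<Rightarrow> 'v) set" where
  "a_n sc Lam n = {a. Vector_Spaces.linear sc sc a \<and> (\<forall>s. a ` Lam s \<subseteq> Lam (s + n))}"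

definition U_tilde :: "('a::field \<Rightarrow> 'v::ab_group_add \<Rightarrow> 'v) \<Rightarrow> (int \<Rightarrow> 'v set) \<Rightarrow> int \<Rightarrow> ('v \<Rightarrow> 'v) set" where
  "U_tilde sc Lam n = {(\<lambda>x. x + a x) | a. a \<in> a_n sc Lam n}"

definition sigma_adj :: "('v \<Rightarrow> 'v \<Rightarrow> 'a) \<Rightarrow> ('w \<Rightarrow> 'w \<Rightarrow> 'a) \<Rightarrow> ('v \<Rightarrow> 'w) \<Rightarrow> ('w \<Rightarrow> 'v)" where
  "sigma_adj h h' f = (THE g. \<forall>v w. h' (f v) w = h v (g w))"

definition isometry ::
  "('a::field \<Rightarrow> 'v::ab_group_add \<Rightarrow> 'v) \<Rightarrow> ('a \<Rightarrow> 'w::ab_group_add \<Rightarrow> 'w) \<Rightarrow>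
   ('v \<Rightarrow> 'v \<Rightarrow> 'a) \<Rightarrow> ('w \<Rightarrow> 'w \<Rightarrow> 'a) \<Rightarrow> ('v \<Rightarrow> 'w) \<Rightarrow> bool" where
  "isometry sc sc' h h' phi \<longleftrightarrow> Vector_Spaces.linear sc sc' phi \<and> bij phi \<and>
     (\<forall>x y. h' (phi x) (phi y) = h x y)"

end

theory Submission
  imports Defs "HOL-Computational_Algebra.Polynomial"
begin


locale dval =
  fixes v :: "'a::field \<Rightarrow> int"
  assumes dv: "discrete_valuation v"
begin

lemma vmult: "x \<noteq> 0 \<Longrightarrow> y \<noteq> 0 \<Longrightarrow> v (x*y) = v x + v y"
  using dv unfolding discrete_valuation_def by blast
lemma vadd: "x \<noteq> 0 \<Longrightarrow> y \<noteq> 0 \<Longrightarrow> x + y \<noteq> 0 \<Longrightarrow> min (v x) (v y) \<le> v (x+y)"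
  using dv unfolding discrete_valuation_def by blast
lemma v1: "v 1 = 0" using vmult[of 1 1] by simp
lemma vm1: "v (-1) = 0" using vmult[of "-1" "-1"] v1 by simp
lemma vneg: "v (-x) = v x"
proof (cases "x = 0")
  case False then show ?thesis using vmult[of "-1" x] vm1 by simp
qed simp
lemma vinv: "x \<noteq> 0 \<Longrightarrow> v (inverse x) = - v x"
  using vmult[of x "inverse x"] v1 by simp
lemma vpow: "x \<noteq> 0 \<Longrightarrow> v (x ^ m) = int m * v x"
  by (induction m) (auto simp: v1 vmult algebra_simps)

lemma vg_iff: "x \<in> val_ge v k \<longleftrightarrow> x = 0 \<or> k \<le> v x" by (simp add: val_ge_def)
lemma vg_0[simp]: "0 \<in> val_ge v k" by (simp add: val_ge_def)
lemma vg_add: "a \<in> val_ge v k \<Longrightarrow> b \<in> val_ge v k \<Longrightarrow> a + b \<in> val_ge v k"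
  unfolding val_ge_def using vadd[of a b] by fastforce
lemma vg_neg: "a \<in> val_ge v k \<Longrightarrow> - a \<in> val_ge v k"
  unfolding val_ge_def using vneg[of a] by auto
lemma vg_diff: "a \<in> val_ge v k \<Longrightarrow> b \<in> val_ge v k \<Longrightarrow> a - b \<in> val_ge v k"
  using vg_add[of a k "-b"] vg_neg[of b k] by simp
lemma vg_mult: "a \<in> val_ge v k \<Longrightarrow> b \<in> val_ge v l \<Longrightarrow> a * b \<in> val_ge v (k + l)"
  unfolding val_ge_def by (cases "a=0"; cases "b=0") (auto simp: vmult)
lemma vg_mono: "k \<le> l \<Longrightarrow> a \<in> val_ge v l \<Longrightarrow> a \<in> val_ge v k"
  unfolding val_ge_def by auto
lemma vg_sum: "(\<And>i. i \<in> I \<Longrightarrow> f i \<in> val_ge v k) \<Longrightarrow> sum f I \<in> val_ge v k"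
  by (induction I rule: infinite_finite_induct) (auto intro: vg_add)
lemma vg_inter: "(\<And>k. x \<in> val_ge v k) \<Longrightarrow> x = 0"
  using vg_iff[of x "v x + 1"] by auto
lemma vg_one: "1 \<in> val_ge v 0" "-1 \<in> val_ge v 0"
  by (auto simp: vg_iff v1 vm1)
lemma vg_div_pow: assumes "p \<noteq> 0" "v p = 1" "a \<in> val_ge v (int m)"
  shows "a * inverse (p ^ m) \<in> val_ge v 0"
proof -
  have "inverse (p^m) \<in> val_ge v (- int m)"
    using assms by (simp add: vg_iff vinv vpow)
  from vg_mult[OF assms(3) this] show ?thesis by simp
qed
lemma vg_pow: assumes "p \<noteq> 0" "v p = 1" shows "p ^ m \<in> val_ge v (int m)"
  using assms by (simp add: vg_iff vpow)
lemma exists_pow_int: assumes "p \<noteq> 0" "v p = 1"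
  shows "\<exists>m. \<forall>m'\<ge>m. p ^ m' * c \<in> val_ge v 0"
proof (cases "c = 0")
  case False
  show ?thesis
  proof (intro exI allI impI)
    fix m' assume "nat (- v c) \<le> m'"
    then show "p ^ m' * c \<in> val_ge v 0" using assms False
      by (simp add: vg_iff vmult vpow)
  qed
qed simp

lemma exists_pow_int_fin: assumes "p \<noteq> 0" "v p = 1" "finite S"
  shows "\<exists>m. \<forall>b\<in>S. p ^ m * c b \<in> val_ge v 0"
proof -
  have "\<exists>m. \<forall>m'\<ge>m. \<forall>b\<in>S. p ^ m' * c b \<in> val_ge v 0"
    using assms(3)
  proof (induction S rule: finite_induct)
    case (insert x F)
    then obtain m1 where m1: "\<forall>m'\<ge>m1. \<forall>b\<in>F. p ^ m' * c b \<in> val_ge v 0" by blast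
    obtain m2 where m2: "\<forall>m'\<ge>m2. p ^ m' * c x \<in> val_ge v 0"
      using exists_pow_int[OF assms(1,2)] by blast
    show ?case using m1 m2 by (intro exI[of _ "max m1 m2"]) auto
  qed simp
  then show ?thesis by blast
qed

end


locale hctx = dval v + vector_space sc
  for v :: "'a::field \<Rightarrow> int" and sc :: "'a \<Rightarrow> 'v::ab_group_add \<Rightarrow> 'v" +
  fixes \<rho> :: "'a \<Rightarrow> 'a" and \<epsilon> :: 'a and h :: "'v \<Rightarrow> 'v \<Rightarrow> 'a"
    and Lam :: "int \<Rightarrow> 'v set" and p :: 'a and e :: int and u :: int and S0 :: "'v set"
  assumes vc: "val_complete v"
    and two: "(2::'a) \<notin> val_ideal v"
    and rho: "field_automorphism \<rho>"
    and rhov: "\<forall>x. x \<noteq> 0 \<longrightarrow> v (\<rho> x) = v x"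
    and eps: "\<epsilon> = 1 \<or> \<epsilon> = -1"
    and herm: "eps_hermitian \<rho> \<epsilon> sc h"
    and lat: "\<forall>s. o_lattice v sc (Lam s)"
    and Lmono: "\<forall>s t. s > t \<longrightarrow> Lam s \<subseteq> Lam t"
    and e1: "e \<ge> 1" and p0: "p \<noteq> 0" and vp: "v p = 1"
    and shift: "\<forall>s. sc p ` Lam s = Lam (s + e)"
    and dual: "\<forall>s. lattice_dual v h (Lam s) = Lam (u - s)"
    and S0: "finite S0" "span S0 = UNIV" "Lam 0 = o_span v sc S0"
begin

lemma rho_add: "\<rho> (x + y) = \<rho> x + \<rho> y" and rho_mult: "\<rho> (x * y) = \<rho> x * \<rho> y"
  and rho_1: "\<rho> 1 = 1" and rho_bij: "bij \<rho>"
  using rho unfolding field_automorphism_def by auto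
lemma rho_0: "\<rho> 0 = 0" using rho_add[of 0 0] by (metis add.right_neutral add_left_cancel)
lemma rho_neg: "\<rho> (- x) = - \<rho> x" using rho_add[of x "-x"] rho_0 by (metis add.right_inverse neg_eq_iff_add_eq_0)
lemma rho_diff: "\<rho> (x - y) = \<rho> x - \<rho> y" using rho_add[of x "-y"] rho_neg by simp
lemma rho_eq0: "\<rho> x = 0 \<longleftrightarrow> x = 0"
  using rho_bij rho_0 by (metis bij_def injD)
lemma rho_pow: "\<rho> (x ^ m) = \<rho> x ^ m" by (induction m) (auto simp: rho_1 rho_mult)
lemma two_ne0: "(2::'a) \<noteq> 0" using two vg_0 by metis
lemma v2: "v 2 = 0"
proof -
  have "min (v 1) (v 1) \<le> v (1 + 1)" using vadd[of 1 1] two_ne0 by (metis one_add_one one_neq_zero)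
  then have "0 \<le> v 2" using v1 by (metis min.idem one_add_one)
  moreover have "\<not> 1 \<le> v 2" using two two_ne0 unfolding vg_iff by blast
  ultimately show ?thesis by simp
qed
lemma half_vg: "inverse (2::'a) \<in> val_ge v 0" using vinv[OF two_ne0] v2 unfolding vg_iff by simp
lemma rho_2: "\<rho> 2 = 2" using rho_add[of 1 1] rho_1 by (metis one_add_one)
lemma rho_half: "\<rho> (inverse 2) = inverse 2"
proof -
  have "\<rho> 2 * \<rho> (inverse 2) = 1" using rho_mult[of 2 "inverse 2"] rho_1 two_ne0 by (metis right_inverse)
  then show ?thesis using rho_2 by (metis inverse_unique)
qed
lemma rho_eps: "\<rho> \<epsilon> = \<epsilon>" using eps rho_1 rho_neg by metis
lemma eps_sq: "\<epsilon> * \<epsilon> = 1" using eps by auto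
lemma eps_vg: "\<epsilon> \<in> val_ge v 0" using eps vg_one by metis
lemma rho_vg: "x \<in> val_ge v k \<Longrightarrow> \<rho> x \<in> val_ge v k"
  using rhov rho_eq0 unfolding vg_iff by metis

lemma h_addL: "h (x + y) z = h x z + h y z"
  and h_addR: "h x (y + z) = h x y + h x z"
  and h_sc: "h (sc a x) (sc b y) = \<rho> a * \<epsilon> * \<rho> (h y x) * b"
  and h_nd: "(\<forall>w. h x w = 0) \<Longrightarrow> x = 0"
  using herm unfolding eps_hermitian_def by blast+
lemma hsym: "h x y = \<epsilon> * \<rho> (h y x)"
  using h_sc[of 1 x 1 y] rho_1 by simp
lemma h_scL: "h (sc a x) y = \<rho> a * h x y"
  using h_sc[of a x 1 y] hsym[of x y] by simp
lemma h_scR: "h x (sc b y) = h x y * b"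
  using h_sc[of 1 x b y] hsym[of x y] rho_1 by simp
lemma h_0L[simp]: "h 0 y = 0" using h_addL[of 0 0 y] by (metis add.right_neutral add_left_cancel)
lemma h_0R[simp]: "h x 0 = 0" using h_addR[of x 0 0] by (metis add.right_neutral add_left_cancel)
lemma h_negL: "h (- x) y = - h x y" using h_addL[of x "-x" y] by (metis h_0L add.right_inverse neg_eq_iff_add_eq_0)
lemma h_negR: "h x (- y) = - h x y" using h_addR[of x y "-y"] by (metis h_0R add.right_inverse neg_eq_iff_add_eq_0)
lemma h_diffL: "h (x - y) z = h x z - h y z" using h_addL[of x "-y" z] h_negL by simp
lemma h_diffR: "h x (y - z) = h x y - h x z" using h_addR[of x y "-z"] h_negR by simp
lemma h_sumL: "h (\<Sum>i\<in>I. f i) y = (\<Sum>i\<in>I. h (f i) y)"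
  by (induction I rule: infinite_finite_induct) (auto simp: h_addL)
lemma h_ndR: "(\<And>x. h x y = 0) \<Longrightarrow> y = 0"
  using h_nd[of y] hsym rho_0 by (metis mult_zero_right)

lemma o_span_0: "0 \<in> o_span v sc S"
  unfolding o_span_def by (auto intro!: exI[of _ "\<lambda>_. 0"])
lemma o_span_add: "x \<in> o_span v sc S \<Longrightarrow> y \<in> o_span v sc S \<Longrightarrow> x + y \<in> o_span v sc S"
  unfolding o_span_def
  apply clarify
  subgoal for c d
    by (rule exI[of _ "\<lambda>b. c b + d b"]) (auto intro: vg_add simp: scale_left_distrib sum.distrib)
  done
lemma o_span_scale: "a \<in> val_ge v 0 \<Longrightarrow> x \<in> o_span v sc S \<Longrightarrow> sc a x \<in> o_span v sc S"
  unfolding o_span_def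
  apply clarify
  subgoal for c
    using vg_mult[of a 0 "c _" 0]
    by (intro exI[of _ "\<lambda>b. a * c b"]) (auto simp: scale_sum_right)
  done
lemma Lam_o: "\<exists>S. Lam s = o_span v sc S" using lat unfolding o_lattice_def by blast
lemma L_0[simp]: "0 \<in> Lam s" using Lam_o[of s] o_span_0 by metis
lemma L_add: "x \<in> Lam s \<Longrightarrow> y \<in> Lam s \<Longrightarrow> x + y \<in> Lam s" using Lam_o[of s] o_span_add by metis
lemma L_scale: "a \<in> val_ge v 0 \<Longrightarrow> x \<in> Lam s \<Longrightarrow> sc a x \<in> Lam s" using Lam_o[of s] o_span_scale by metis
lemma L_neg: "x \<in> Lam s \<Longrightarrow> - x \<in> Lam s" using L_scale[OF vg_one(2)] by simp
lemma L_diff: "x \<in> Lam s \<Longrightarrow> y \<in> Lam s \<Longrightarrow> x - y \<in> Lam s" using L_add[of x s "-y"] L_neg by simp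
lemma L_sum: "(\<And>i. i \<in> I \<Longrightarrow> f i \<in> Lam s) \<Longrightarrow> sum f I \<in> Lam s"
  by (induction I rule: infinite_finite_induct) (auto intro: L_add)
lemma L_mono: "s \<le> t \<Longrightarrow> x \<in> Lam t \<Longrightarrow> x \<in> Lam s"
  using Lmono less_le by blast
lemma L_pow: "sc (p ^ m) ` Lam s = Lam (s + int m * e)"
proof (induction m)
  case (Suc m)
  have "sc (p ^ Suc m) ` Lam s = sc p ` (sc (p^m) ` Lam s)"
    by (auto simp: image_image mult.commute)
  also have "\<dots> = Lam (s + int (Suc m) * e)" using Suc shift by (simp add: algebra_simps)
  finally show ?case .
qed simp
lemma L_pow_mem: "x \<in> Lam (s + int m * e) \<Longrightarrow> \<exists>z\<in>Lam s. x = sc (p^m) z"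
  using L_pow[of m s] by auto
lemma L_pow_in: "z \<in> Lam s \<Longrightarrow> sc (p^m) z \<in> Lam (s + int m * e)"
  using L_pow[of m s] by auto

lemma L_coef: assumes "\<And>b. b \<in> S0 \<Longrightarrow> w b \<in> val_ge v (int m)"
  shows "(\<Sum>b\<in>S0. sc (w b) b) \<in> Lam (int m * e)"
proof -
  have c: "\<forall>b\<in>S0. w b * inverse (p^m) \<in> val_ge v 0"
    using vg_div_pow[OF p0 vp] assms by blast
  have "(\<Sum>b\<in>S0. sc (w b * inverse (p^m)) b) \<in> o_span v sc S0"
    unfolding o_span_def by (intro CollectI exI[of _ "\<lambda>b. w b * inverse (p^m)"] conjI c refl)
  then have "(\<Sum>b\<in>S0. sc (w b * inverse (p^m)) b) \<in> Lam 0" using S0(3) by simp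
  from L_pow_in[OF this, of m] have
    "sc (p^m) (\<Sum>b\<in>S0. sc (w b * inverse (p^m)) b) \<in> Lam (int m * e)" by simp
  also have "sc (p^m) (\<Sum>b\<in>S0. sc (w b * inverse (p^m)) b) = (\<Sum>b\<in>S0. sc (w b) b)"
    unfolding scale_sum_right scale_scale using p0 by (intro sum.cong refl) (simp add: field_simps)
  finally show ?thesis .
qed

lemma L_ex: "\<exists>s. x \<in> Lam s"
proof -
  have "x \<in> span S0" using S0(2) by simp
  then obtain c where x: "x = (\<Sum>b\<in>S0. sc (c b) b)" using span_finite[OF S0(1)] by auto
  obtain m where m: "\<forall>b\<in>S0. p ^ m * c b \<in> val_ge v 0"
    using exists_pow_int_fin[OF p0 vp S0(1)] by blast
  have eq: "sc (p^m) x = (\<Sum>b\<in>S0. sc (p^m * c b) b)" by (simp add: x scale_sum_right)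
  have "(\<Sum>b\<in>S0. sc (p^m * c b) b) \<in> Lam 0" unfolding S0(3) o_span_def using m by auto
  then have "sc (p^m) x \<in> Lam (- int m * e + int m * e)" using eq by simp
  from L_pow_mem[OF this] obtain z where z: "z \<in> Lam (- int m * e)" "sc (p^m) x = sc (p^m) z"
    by blast
  then have "x = z" using p0 by simp
  with z show ?thesis by blast
qed

lemma L_scale_any: "\<exists>m::nat. \<forall>s z. z \<in> Lam (s + int m * e) \<longrightarrow> sc c z \<in> Lam s"
proof -
  obtain m where m: "p ^ m * c \<in> val_ge v 0" using exists_pow_int[OF p0 vp, of c] by blast
  show ?thesis
  proof (intro exI allI impI)
    fix s z assume "z \<in> Lam (s + int m * e)"
    then obtain y where y: "y \<in> Lam s" "z = sc (p^m) y" using L_pow_mem by blast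
    have "sc c z = sc (p ^ m * c) y" using y by (simp add: mult.commute)
    then show "sc c z \<in> Lam s" using L_scale[OF m y(1)] by simp
  qed
qed

lemma h_cont: assumes a: "a \<in> Lam s" and b: "b \<in> Lam t" and st: "u - s + int m * e \<le> t"
  shows "h b a \<in> val_ge v (int m + 1)" "h a b \<in> val_ge v (int m + 1)"
proof -
  have "b \<in> Lam (u - s + int m * e)" using L_mono[OF st b] .
  then obtain b' where b': "b' \<in> Lam (u - s)" "b = sc (p^m) b'" using L_pow_mem by blast
  have "h b' a \<in> val_ge v 1" using b'(1) a dual unfolding lattice_dual_def by blast
  moreover have "\<rho> (p^m) \<in> val_ge v (int m)" using rho_vg[OF vg_pow[OF p0 vp]] .
  ultimately have "\<rho> (p^m) * h b' a \<in> val_ge v (int m + 1)" using vg_mult by blast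
  then show 1: "h b a \<in> val_ge v (int m + 1)" using b' by (simp add: h_scL)
  have "\<epsilon> * \<rho> (h b a) \<in> val_ge v (0 + (int m + 1))" using vg_mult[OF eps_vg rho_vg[OF 1]] .
  then show "h a b \<in> val_ge v (int m + 1)" using hsym[of a b] by simp
qed

lemma L_haus: assumes "\<And>s. x \<in> Lam s" shows "x = 0"
proof (rule h_ndR)
  fix y
  obtain t where t: "y \<in> Lam t" using L_ex by blast
  show "h y x = 0"
  proof (rule vg_inter)
    fix k :: int
    have "h y x \<in> val_ge v (int (nat k) + 1)"
      by (rule h_cont(2)[OF t assms[of "u - t + int (nat k) * e"], of "nat k"]) simp
    then show "h y x \<in> val_ge v k" by (rule vg_mono[rotated]) simp
  qed
qed

end


context hctx begin

definition conv :: "(nat \<Rightarrow> 'v) \<Rightarrow> 'v \<Rightarrow> bool" where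
  "conv y L \<longleftrightarrow> (\<forall>s. \<exists>N. \<forall>j\<ge>N. L - y j \<in> Lam s)"

lemma conv_unique: assumes "conv y L1" "conv y L2" shows "L1 = L2"
proof -
  have "\<And>s. L1 - L2 \<in> Lam s"
  proof -
    fix s
    obtain N1 where N1: "\<forall>j\<ge>N1. L1 - y j \<in> Lam s" using assms(1) unfolding conv_def by blast
    obtain N2 where N2: "\<forall>j\<ge>N2. L2 - y j \<in> Lam s" using assms(2) unfolding conv_def by blast
    have "L1 - y (max N1 N2) - (L2 - y (max N1 N2)) \<in> Lam s"
      using N1 N2 by (metis L_diff max.cobounded1 max.cobounded2)
    then show "L1 - L2 \<in> Lam s" by simp
  qed
  then have "L1 - L2 = 0" by (rule L_haus)
  then show ?thesis by simp
qed

lemma tele: assumes "\<forall>j\<ge>N. y (Suc j) - y j \<in> Lam s"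
  shows "\<forall>j\<ge>N. \<forall>i\<ge>j. y i - y j \<in> Lam s"
proof (intro allI impI)
  fix j i assume j: "N \<le> j" and i: "j \<le> i"
  from i show "y i - y j \<in> Lam s"
  proof (induction i rule: dec_induct)
    case base then show ?case by simp
  next
    case (step i)
    have "y (Suc i) - y j = (y (Suc i) - y i) + (y i - y j)" by simp
    also have "\<dots> \<in> Lam s" using step assms j by (intro L_add) auto
    finally show ?case .
  qed
qed

lemma int_nat_e: "s \<le> int m * e" if "nat s \<le> m"
proof -
  have "int m * 1 \<le> int m * e" by (rule mult_left_mono) (use e1 in auto)
  then show ?thesis using that by linarith
qed

lemma L_complete:
  assumes cy: "\<forall>s. \<exists>N. \<forall>j\<ge>N. y (Suc j) - y j \<in> Lam s"
  shows "\<exists>L. conv y L"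
proof -
  define Nf where "Nf m = (SOME N. \<forall>j\<ge>N. \<forall>i\<ge>j. y i - y j \<in> Lam (int m * e))" for m :: nat
  have Nf: "\<forall>j\<ge>Nf m. \<forall>i\<ge>j. y i - y j \<in> Lam (int m * e)" for m
  proof -
    obtain N where "\<forall>j\<ge>N. y (Suc j) - y j \<in> Lam (int m * e)" using cy by blast
    then have "\<exists>N. \<forall>j\<ge>N. \<forall>i\<ge>j. y i - y j \<in> Lam (int m * e)" using tele by blast
    then show ?thesis unfolding Nf_def by (rule someI_ex)
  qed
  define Na where "Na m = (\<Sum>i\<le>m. Nf i)" for m
  have Na_ge: "Nf m \<le> Na m" for m unfolding Na_def by (rule member_le_sum) auto
  have Na_mono: "Na m \<le> Na m'" if "m \<le> m'" for m m'
    unfolding Na_def by (rule sum_mono2) (use that in auto)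
  define z where "z m = y (Na m)" for m
  have zd: "z (Suc m) - z m \<in> Lam (int m * e)" for m
    unfolding z_def using Nf[of m] Na_ge[of m] Na_mono[of m "Suc m"] by auto
  have dex: "\<exists>c. (\<forall>b\<in>S0. c b \<in> val_ge v (int m)) \<and> z (Suc m) - z m = (\<Sum>b\<in>S0. sc (c b) b)" for m
  proof -
    have "z (Suc m) - z m \<in> Lam (0 + int m * e)" using zd by simp
    then obtain w where w: "w \<in> Lam 0" "z (Suc m) - z m = sc (p^m) w" using L_pow_mem by blast
    then obtain c where c: "\<forall>b\<in>S0. c b \<in> val_ge v 0" "w = (\<Sum>b\<in>S0. sc (c b) b)"
      using S0(3) unfolding o_span_def by blast
    show ?thesis
    proof (intro exI conjI ballI)
      fix b assume "b \<in> S0"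
      then show "p^m * c b \<in> val_ge v (int m)" using vg_mult[OF vg_pow[OF p0 vp] c(1)[rule_format]] by simp
    next
      show "z (Suc m) - z m = (\<Sum>b\<in>S0. sc (p^m * c b) b)" using w c by (simp add: scale_sum_right)
    qed
  qed
  define d where "d m = (SOME c. (\<forall>b\<in>S0. c b \<in> val_ge v (int m)) \<and> z (Suc m) - z m = (\<Sum>b\<in>S0. sc (c b) b))" for m
  have d: "(\<forall>b\<in>S0. d m b \<in> val_ge v (int m)) \<and> z (Suc m) - z m = (\<Sum>b\<in>S0. sc (d m b) b)" for m
    unfolding d_def using someI_ex[OF dex[of m]] .
  define P where "P m b = (\<Sum>i<m. d i b)" for m b
  have Pc: "P m' b - P m b \<in> val_ge v k" if b: "b \<in> S0" and mm: "nat k \<le> m" "m \<le> m'" for m m' b k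
    using mm(2)
  proof (induction m' rule: dec_induct)
    case base then show ?case by simp
  next
    case (step i)
    have "P (Suc i) b - P m b = (P i b - P m b) + d i b" unfolding P_def by simp
    moreover have "d i b \<in> val_ge v k"
      using d[of i] b step(1) mm(1) by (intro vg_mono[of k "int i"]) auto
    ultimately show ?case using vg_add[OF step(3), of "d i b"] by (simp add: algebra_simps)
  qed
  have Lex: "\<exists>L. \<forall>k. \<exists>N. \<forall>m\<ge>N. P m b - L \<in> val_ge v k" if b: "b \<in> S0" for b
  proof -
    have "\<forall>k. \<exists>N. \<forall>m\<ge>N. \<forall>m'\<ge>N. P m b - P m' b \<in> val_ge v k"
    proof
      fix k show "\<exists>N. \<forall>m\<ge>N. \<forall>m'\<ge>N. P m b - P m' b \<in> val_ge v k"
      proof (intro exI allI impI)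
        fix m m' assume "nat k \<le> m" "nat k \<le> m'"
        then show "P m b - P m' b \<in> val_ge v k"
          using Pc[OF b, of k m' m] Pc[OF b, of k m m'] vg_neg[of "P m' b - P m b" k]
          by (cases "m' \<le> m") auto
      qed
    qed
    moreover note spec[OF vc[unfolded val_complete_def], of "\<lambda>m. P m b"]
    ultimately show ?thesis by simp
  qed
  define Lc where "Lc b = (SOME L. \<forall>k. \<exists>N. \<forall>m\<ge>N. P m b - L \<in> val_ge v k)" for b
  have Lc: "\<forall>k. \<exists>N. \<forall>m\<ge>N. P m b - Lc b \<in> val_ge v k" if "b \<in> S0" for b
    unfolding Lc_def by (rule someI_ex) (rule Lex[OF that])
  have zeq: "z m = z 0 + (\<Sum>b\<in>S0. sc (P m b) b)" for m
  proof (induction m)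
    case 0 then show ?case by (simp add: P_def)
  next
    case (Suc m)
    have "z (Suc m) = z m + (z (Suc m) - z m)" by simp
    also have "\<dots> = z 0 + ((\<Sum>b\<in>S0. sc (P m b) b) + (\<Sum>b\<in>S0. sc (d m b) b))"
      using Suc d[of m] by simp
    also have "(\<Sum>b\<in>S0. sc (P m b) b) + (\<Sum>b\<in>S0. sc (d m b) b) = (\<Sum>b\<in>S0. sc (P (Suc m) b) b)"
      unfolding P_def by (simp add: sum.distrib[symmetric] scale_left_distrib)
    finally show ?case .
  qed
  define Y where "Y = z 0 + (\<Sum>b\<in>S0. sc (Lc b) b)"
  have Yz: "Y - z m = (\<Sum>b\<in>S0. sc (Lc b - P m b) b)" for m
    unfolding Y_def zeq[of m] by (simp add: scale_left_diff_distrib sum_subtractf)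
  have convz: "\<exists>N. \<forall>m\<ge>N. Y - z m \<in> Lam (int k * e)" for k :: nat
  proof -
    have ev: "\<forall>b\<in>S0. eventually (\<lambda>m. Lc b - P m b \<in> val_ge v (int k)) sequentially"
    proof
      fix b assume b: "b \<in> S0"
      obtain N where "\<forall>m\<ge>N. P m b - Lc b \<in> val_ge v (int k)" using Lc[OF b] by blast
      then have "\<forall>m\<ge>N. Lc b - P m b \<in> val_ge v (int k)"
        using vg_neg by (metis minus_diff_eq)
      then show "eventually (\<lambda>m. Lc b - P m b \<in> val_ge v (int k)) sequentially"
        unfolding eventually_sequentially by blast
    qed
    have "eventually (\<lambda>m. \<forall>b\<in>S0. Lc b - P m b \<in> val_ge v (int k)) sequentially"
      using eventually_ball_finite[OF S0(1) ev] .
    then obtain N where N: "\<forall>m\<ge>N. \<forall>b\<in>S0. Lc b - P m b \<in> val_ge v (int k)"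
      unfolding eventually_sequentially by blast
    show ?thesis
    proof (intro exI allI impI)
      fix m assume "N \<le> m"
      then show "Y - z m \<in> Lam (int k * e)" unfolding Yz using N by (intro L_coef) auto
    qed
  qed
  have "conv y Y"
    unfolding conv_def
  proof
    fix s
    obtain N where N: "\<forall>m\<ge>N. Y - z m \<in> Lam (int (nat s) * e)" using convz by blast
    define m where "m = max N (nat s)"
    have m1: "Y - z m \<in> Lam s" using N L_mono[OF int_nat_e[of s "nat s"]] unfolding m_def by auto
    show "\<exists>N. \<forall>j\<ge>N. Y - y j \<in> Lam s"
    proof (intro exI allI impI)
      fix j assume j: "Na m \<le> j"
      have "y j - z m \<in> Lam (int m * e)" unfolding z_def using Nf[of m] Na_ge[of m] j by auto
      then have m2: "y j - z m \<in> Lam s" using L_mono[OF int_nat_e[of s m]] unfolding m_def by auto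
      have "Y - y j = (Y - z m) - (y j - z m)" by simp
      then show "Y - y j \<in> Lam s" using L_diff[OF m1 m2] by simp
    qed
  qed
  then show ?thesis by blast
qed

end


locale hctx2 = hctx +
  fixes g :: "'b \<Rightarrow> 'b" and n :: int
  assumes g_lin: "Vector_Spaces.linear sc sc g"
    and g_sa: "\<forall>x y. h (g x) y = h x (g y)"
    and g_maps: "\<forall>s x. x \<in> Lam s \<longrightarrow> g x - x \<in> Lam (s + n)"
    and n1: "n \<ge> 1"
begin

lemma g_add: "g (x + y) = g x + g y"
  using g_lin by (simp add: Vector_Spaces.linear_iff)
lemma g_sc: "g (sc c x) = sc c (g x)"
  using g_lin by (simp add: Vector_Spaces.linear_iff)
lemma g_0[simp]: "g 0 = 0" using g_sc[of 0 0] by simp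
lemma g_neg: "g (- x) = - g x" using g_add[of x "-x"] by (metis g_0 add.right_inverse neg_eq_iff_add_eq_0)
lemma g_diff: "g (x - y) = g x - g y" using g_add[of x "-y"] g_neg by simp

primrec evl :: "'a list \<Rightarrow> 'b \<Rightarrow> 'b" where
  "evl [] x = 0"
| "evl (a # as) x = sc a x + g (evl as x)"

definition ev :: "'a poly \<Rightarrow> 'b \<Rightarrow> 'b" where "ev P x = evl (coeffs P) x"

lemma ev_0[simp]: "ev 0 x = 0" by (simp add: ev_def)
lemma ev_pCons: "ev (pCons a P) x = sc a x + g (ev P x)"
proof (cases "coeffs P = [] \<and> a = 0")
  case True then show ?thesis by (simp add: ev_def cCons_def)
next
  case False then show ?thesis by (auto simp: ev_def cCons_def)
qed
lemma ev_add: "ev (P + Q) x = ev P x + ev Q x"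
proof (induction P Q rule: poly_induct2)
  case (pCons a p b q)
  then show ?case by (simp add: ev_pCons g_add scale_left_distrib algebra_simps)
qed simp
lemma ev_smult: "ev (smult a P) x = sc a (ev P x)"
  by (induction P rule: pCons_induct) (simp_all add: ev_pCons g_sc scale_right_distrib mult.commute)
lemma ev_lin_add: "ev P (x + y) = ev P x + ev P y"
  by (induction P rule: pCons_induct) (simp_all add: ev_pCons g_add scale_right_distrib algebra_simps)
lemma ev_lin_sc: "ev P (sc c x) = sc c (ev P x)"
  by (induction P rule: pCons_induct) (simp_all add: ev_pCons g_sc scale_right_distrib mult.commute)
lemma ev_lin_0[simp]: "ev P 0 = 0" using ev_lin_sc[of P 0 0] by simp
lemma ev_lin_neg: "ev P (- x) = - ev P x"
  using ev_lin_add[of P x "-x"] by (metis ev_lin_0 add.right_inverse neg_eq_iff_add_eq_0)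
lemma ev_lin_diff: "ev P (x - y) = ev P x - ev P y"
  using ev_lin_add[of P x "-y"] ev_lin_neg by simp
lemma ev_mult: "ev (P * Q) x = ev P (ev Q x)"
  by (induction P rule: pCons_induct) (simp_all add: ev_pCons ev_add ev_smult)
lemma ev_1: "ev 1 x = x" by (simp add: one_pCons ev_pCons)
lemma ev_X: "ev [:0, 1:] x = g x" by (simp add: ev_pCons)
lemma ev_const: "ev [:a:] x = sc a x" by (simp add: ev_pCons)
lemma ev_diff: "ev (P - Q) x = ev P x - ev Q x"
  using ev_add[of "P - Q" Q x] by (simp add: algebra_simps)
lemma ev_comm: "ev P (ev Q x) = ev Q (ev P x)"
  by (metis ev_mult mult.commute)

definition SA :: "('b \<Rightarrow> 'b) \<Rightarrow> bool" where "SA \<phi> \<longleftrightarrow> (\<forall>x y. h (\<phi> x) y = h x (\<phi> y))"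

lemma SA_mult: "SA (ev P) \<Longrightarrow> SA (ev Q) \<Longrightarrow> SA (ev (P * Q))"
  unfolding SA_def ev_mult by (metis ev_comm)
lemma SA_add: "SA (ev P) \<Longrightarrow> SA (ev Q) \<Longrightarrow> SA (ev (P + Q))"
  unfolding SA_def ev_add by (simp add: h_addL h_addR)
lemma SA_diff: "SA (ev P) \<Longrightarrow> SA (ev Q) \<Longrightarrow> SA (ev (P - Q))"
  unfolding SA_def ev_diff by (simp add: h_diffL h_diffR)
lemma SA_const: "\<rho> a = a \<Longrightarrow> SA (ev [:a:])"
  unfolding SA_def ev_const by (simp add: h_scL h_scR mult.commute)
lemma SA_1: "SA (ev 1)" unfolding SA_def ev_1 by simp
lemma SA_X: "SA (ev [:0,1:])" unfolding SA_def ev_X using g_sa by simp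

definition mp :: "int \<Rightarrow> ('b \<Rightarrow> 'b) \<Rightarrow> bool" where
  "mp m \<phi> \<longleftrightarrow> (\<forall>s x. x \<in> Lam s \<longrightarrow> \<phi> x \<in> Lam (s + m))"

lemma mpD: "mp m \<phi> \<Longrightarrow> x \<in> Lam s \<Longrightarrow> \<phi> x \<in> Lam (s + m)" unfolding mp_def by blast
lemma mp_comp: "mp a \<phi> \<Longrightarrow> mp b \<psi> \<Longrightarrow> mp (a + b) (\<lambda>x. \<phi> (\<psi> x))"
  unfolding mp_def by (metis add.assoc add.commute)
lemma mp_add: "mp a \<phi> \<Longrightarrow> mp a \<psi> \<Longrightarrow> mp a (\<lambda>x. \<phi> x + \<psi> x)"
  unfolding mp_def by (simp add: L_add)
lemma mp_diff: "mp a \<phi> \<Longrightarrow> mp a \<psi> \<Longrightarrow> mp a (\<lambda>x. \<phi> x - \<psi> x)"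
  unfolding mp_def by (simp add: L_diff)
lemma mp_sc: "c \<in> val_ge v 0 \<Longrightarrow> mp a \<phi> \<Longrightarrow> mp a (\<lambda>x. sc c (\<phi> x))"
  unfolding mp_def by (simp add: L_scale)
lemma mp_mono: "b \<le> a \<Longrightarrow> mp a \<phi> \<Longrightarrow> mp b \<phi>"
  unfolding mp_def by (meson L_mono add_left_mono)
lemma mp_id: "mp 0 (\<lambda>x. x)" unfolding mp_def by simp
lemma mp_g: "mp 0 g"
proof -
  have "mp n (\<lambda>x. g x - x)" using g_maps unfolding mp_def by blast
  then have "mp 0 (\<lambda>x. g x - x)" by (rule mp_mono[rotated]) (use n1 in simp)
  from mp_add[OF this mp_id] show ?thesis by simp
qed

abbreviation "hf \<equiv> inverse (2::'a)"

fun PP :: "nat \<Rightarrow> 'a poly" where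
  "PP 0 = 1"
| "PP (Suc j) = PP j * (1 - [:hf:] * ([:0,1:] * PP j ^ 2 - 1))"

definition EE :: "nat \<Rightarrow> 'a poly" where "EE j = [:0,1:] * PP j ^ 2 - 1"

lemma EE_Suc: "EE (Suc j) = EE j * EE j * ([:hf * hf:] * EE j + [:hf * hf - 1:])"
proof -
  define C where "C = [:hf:]"
  have CC: "C + C = 1" unfolding C_def using two_ne0 by (simp add: one_pCons field_simps)
  have c1: "[:hf * hf:] = C * C" unfolding C_def by simp
  have c2: "[:hf * hf - 1:] = C * C - 1" unfolding C_def by (simp add: one_pCons)
  have e: "EE j = [:0,1:] * PP j ^ 2 - 1" by (simp add: EE_def)
  show ?thesis unfolding c1 c2 EE_def PP.simps(2) C_def[symmetric]
    using CC by algebra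
qed

definition kk :: "nat \<Rightarrow> 'b \<Rightarrow> 'b" where "kk j = ev (PP j)"
definition ee :: "nat \<Rightarrow> 'b \<Rightarrow> 'b" where "ee j = ev (EE j)"

lemma hf_vg: "hf * hf \<in> val_ge v 0" "hf * hf - 1 \<in> val_ge v 0"
  using vg_mult[OF half_vg half_vg] vg_diff[OF _ vg_one(1)] by auto

lemma ee_maps: "mp (n * int (Suc j)) (ee j)"
proof (induction j)
  case 0
  have "ee 0 = (\<lambda>x. g x - x)" unfolding ee_def EE_def by (auto simp: ev_diff ev_mult ev_X ev_1)
  then show ?case using g_maps unfolding mp_def by simp
next
  case (Suc j)
  have q: "mp 0 (\<lambda>x. sc (hf * hf) (ee j x) + sc (hf * hf - 1) x)"
  proof -
    have "0 \<le> n * int (Suc j)" using n1 by simp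
    then have "mp 0 (ee j)" using mp_mono Suc by blast
    then show ?thesis by (intro mp_add mp_sc hf_vg mp_id)
  qed
  have "ee (Suc j) = (\<lambda>x. ee j (ee j (sc (hf * hf) (ee j x) + sc (hf * hf - 1) x)))"
    unfolding ee_def EE_Suc by (rule ext) (simp add: ev_mult ev_add ev_const ev_smult)
  moreover have "mp (n * int (Suc j) + (n * int (Suc j) + 0)) \<dots>"
    by (intro mp_comp Suc q)
  ultimately show ?case using n1 by (auto elim!: mp_mono[rotated] simp: algebra_simps)
qed

lemma kk_Suc: "kk (Suc j) x - kk j x = - sc hf (kk j (ee j x))"
  unfolding kk_def ee_def PP.simps(2) EE_def[symmetric]
  by (simp add: ev_mult ev_diff ev_1 ev_const ev_lin_diff ev_lin_sc ev_smult)

lemma kk_0: "kk 0 x = x" by (simp add: kk_def ev_1)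

lemma kk_maps: "mp 0 (kk j)"
proof (induction j)
  case 0 then show ?case using mp_id by (simp add: kk_0[abs_def])
next
  case (Suc j)
  have "0 \<le> n * int (Suc j)" using n1 by simp
  then have "mp 0 (ee j)" using mp_mono ee_maps by blast
  then have "mp (0 + 0) (\<lambda>x. kk j (ee j x))" using Suc by (intro mp_comp)
  then have "mp 0 (\<lambda>x. kk j x - sc hf (kk j (ee j x)))"
    using Suc by (intro mp_diff mp_sc[OF half_vg]) auto
  moreover have "kk (Suc j) = (\<lambda>x. kk j x - sc hf (kk j (ee j x)))"
    using kk_Suc by (metis (no_types, lifting) add_diff_cancel_left' diff_add_cancel diff_conv_add_uminus)
  ultimately show ?case by simp
qed


lemma SA_PP: "SA (ev (PP j))"
proof (induction j)
  case 0 then show ?case using SA_1 by simp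
next
  case (Suc j)
  have e: "SA (ev ([:0,1:] * PP j ^ 2 - 1))"
    unfolding power2_eq_square by (intro SA_diff SA_1 SA_mult SA_X Suc)
  have "SA (ev (1 - [:hf:] * ([:0,1:] * PP j ^ 2 - 1)))"
    by (intro SA_diff SA_1 SA_mult SA_const rho_half e)
  then show ?case using Suc by (simp only: PP.simps) (rule SA_mult)
qed

lemma kk_iso: "h (kk j x) (g (kk j y)) = h x y + h x (ee j y)"
proof -
  have "h (kk j x) (g (kk j y)) = h x (kk j (g (kk j y)))"
    using SA_PP[of j] unfolding SA_def kk_def by blast
  also have "kk j (g (kk j y)) = ev (EE j + 1) y"
  proof -
    have "kk j (g (kk j y)) = ev (PP j) (ev [:0,1:] (ev (PP j) y))" by (simp only: kk_def ev_X)
    also have "\<dots> = ev (PP j * ([:0,1:] * PP j)) y" by (simp only: ev_mult)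
    also have "PP j * ([:0,1:] * PP j) = EE j + 1" unfolding EE_def by (simp add: power2_eq_square algebra_simps)
    finally show ?thesis .
  qed
  also have "\<dots> = ee j y + y" by (simp add: ev_add ev_1 ee_def)
  finally show ?thesis by (simp add: h_addR add.commute)
qed

end


context hctx2 begin

lemma n_Suc: "int (Suc j) \<le> n * int (Suc j)"
  using mult_right_mono[OF n1, of "int (Suc j)"] by simp

lemma kk_step: "x \<in> Lam s \<Longrightarrow> kk (Suc j) x - kk j x \<in> Lam (s + n * int (Suc j))"
proof -
  assume x: "x \<in> Lam s"
  have "ee j x \<in> Lam (s + n * int (Suc j))" using mpD[OF ee_maps x] .
  then have "kk j (ee j x) \<in> Lam (s + n * int (Suc j) + 0)" using mpD[OF kk_maps] by blast
  then have "- sc hf (kk j (ee j x)) \<in> Lam (s + n * int (Suc j))"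
    using L_neg L_scale[OF half_vg] by simp
  then show ?thesis using kk_Suc by simp
qed

lemma kk_cauchy: assumes x: "x \<in> Lam s0"
  shows "\<forall>t. \<exists>N. \<forall>j\<ge>N. kk (Suc j) x - kk j x \<in> Lam t"
proof (intro allI)
  fix t show "\<exists>N. \<forall>j\<ge>N. kk (Suc j) x - kk j x \<in> Lam t"
  proof (intro exI[of _ "nat (t - s0)"] allI impI)
    fix j assume "nat (t - s0) \<le> j"
    then have "t \<le> s0 + n * int (Suc j)" using n_Suc[of j] by linarith
    then show "kk (Suc j) x - kk j x \<in> Lam t" using L_mono kk_step[OF x] by blast
  qed
qed

definition K :: "'b \<Rightarrow> 'b" where "K x = (SOME L. conv (\<lambda>j. kk j x) L)"

lemma K_conv: "conv (\<lambda>j. kk j x) (K x)"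
proof -
  obtain s0 where "x \<in> Lam s0" using L_ex by blast
  from L_complete[OF kk_cauchy[OF this]] show ?thesis unfolding K_def by (rule someI_ex)
qed

lemma conv_add: "conv y L1 \<Longrightarrow> conv z L2 \<Longrightarrow> conv (\<lambda>j. y j + z j) (L1 + L2)"
  unfolding conv_def
proof (intro allI)
  fix s assume a: "\<forall>s. \<exists>N. \<forall>j\<ge>N. L1 - y j \<in> Lam s" "\<forall>s. \<exists>N. \<forall>j\<ge>N. L2 - z j \<in> Lam s"
  obtain N1 where N1: "\<forall>j\<ge>N1. L1 - y j \<in> Lam s" using a(1) by blast
  obtain N2 where N2: "\<forall>j\<ge>N2. L2 - z j \<in> Lam s" using a(2) by blast
  show "\<exists>N. \<forall>j\<ge>N. L1 + L2 - (y j + z j) \<in> Lam s"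
  proof (intro exI[of _ "max N1 N2"] allI impI)
    fix j assume "max N1 N2 \<le> j"
    then have "(L1 - y j) + (L2 - z j) \<in> Lam s" using N1 N2 by (intro L_add) auto
    then show "L1 + L2 - (y j + z j) \<in> Lam s" by (simp add: algebra_simps)
  qed
qed

lemma conv_sc: "conv y L \<Longrightarrow> conv (\<lambda>j. sc c (y j)) (sc c L)"
  unfolding conv_def
proof (intro allI)
  fix s assume a: "\<forall>s. \<exists>N. \<forall>j\<ge>N. L - y j \<in> Lam s"
  obtain m where m: "\<forall>s z. z \<in> Lam (s + int m * e) \<longrightarrow> sc c z \<in> Lam s" using L_scale_any by blast
  obtain N where N: "\<forall>j\<ge>N. L - y j \<in> Lam (s + int m * e)" using a by blast
  show "\<exists>N. \<forall>j\<ge>N. sc c L - sc c (y j) \<in> Lam s"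
    using N m by (metis scale_right_diff_distrib)
qed

lemma K_add: "K (x + y) = K x + K y"
proof -
  have "conv (\<lambda>j. kk j (x + y)) (K x + K y)"
    using conv_add[OF K_conv K_conv] by (simp add: kk_def ev_lin_add)
  then show ?thesis using conv_unique K_conv by blast
qed

lemma K_sc: "K (sc c x) = sc c (K x)"
proof -
  have "conv (\<lambda>j. kk j (sc c x)) (sc c (K x))"
    using conv_sc[OF K_conv] by (simp add: kk_def ev_lin_sc)
  then show ?thesis using conv_unique K_conv by blast
qed

lemma K_lin: "Vector_Spaces.linear sc sc K"
  using g_lin K_add K_sc by (simp add: Vector_Spaces.linear_iff)

lemma K_close: assumes x: "x \<in> Lam s" shows "K x - kk j x \<in> Lam (s + n * int (Suc j))"
proof -
  let ?t = "s + n * int (Suc j)"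
  have st: "\<forall>i\<ge>j. kk (Suc i) x - kk i x \<in> Lam ?t"
  proof (intro allI impI)
    fix i assume "j \<le> i"
    then have "?t \<le> s + n * int (Suc i)" using n1 by (simp add: mult_left_mono)
    then show "kk (Suc i) x - kk i x \<in> Lam ?t" using L_mono kk_step[OF x] by blast
  qed
  have tl: "\<forall>i\<ge>j. kk i x - kk j x \<in> Lam ?t" using tele[OF st] by blast
  obtain N where N: "\<forall>i\<ge>N. K x - kk i x \<in> Lam ?t" using K_conv unfolding conv_def by blast
  have "(K x - kk (max N j) x) + (kk (max N j) x - kk j x) \<in> Lam ?t"
    using N tl by (intro L_add) auto
  then show ?thesis by simp
qed

lemma K_id: "x \<in> Lam s \<Longrightarrow> K x - x \<in> Lam (s + n)"
  using K_close[of x s 0] by (simp add: kk_0)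

lemma K_maps: "mp 0 K"
  unfolding mp_def
proof (intro allI impI)
  fix s x assume x: "x \<in> Lam s"
  have "x + (K x - x) \<in> Lam s" using K_id[OF x] n1 by (intro L_add x) (auto intro: L_mono[rotated])
  then show "K x \<in> Lam (s + 0)" by simp
qed

lemma K_iso: "h (K x) (g (K y)) = h x y"
proof -
  obtain s1 where s1: "x \<in> Lam s1" using L_ex by blast
  obtain s2 where s2: "y \<in> Lam s2" using L_ex by blast
  define s where "s = min s1 s2"
  have x: "x \<in> Lam s" unfolding s_def using s1 L_mono min.cobounded1 by blast
  have y: "y \<in> Lam s" unfolding s_def using s2 L_mono min.cobounded2 by blast
  let ?D = "h (K x) (g (K y)) - h x y"
  have "?D \<in> val_ge v k" for k
  proof -
    define m where "m = nat k"
    define j where "j = nat (u - 2 * s + int m * e)"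
    let ?t = "s + n * int (Suc j)"
    have tt: "u - s + int m * e \<le> ?t" using n_Suc[of j] unfolding j_def by linarith
    have w: "g (K y) \<in> Lam s" using mpD[OF mp_g mpD[OF K_maps y]] by simp
    have kx: "kk j x \<in> Lam s" using mpD[OF kk_maps x] by simp
    have T1: "h (K x - kk j x) (g (K y)) \<in> val_ge v (int m + 1)"
      by (rule h_cont(1)[OF w K_close[OF x] tt])
    have "g (K y - kk j y) \<in> Lam (?t + 0)" by (rule mpD[OF mp_g K_close[OF y]])
    then have T2: "h (kk j x) (g (K y - kk j y)) \<in> val_ge v (int m + 1)"
      using h_cont(2)[OF kx _ tt] by simp
    have T3: "h x (ee j y) \<in> val_ge v (int m + 1)"
      by (rule h_cont(2)[OF x mpD[OF ee_maps y] tt])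
    have "?D = h (K x - kk j x) (g (K y)) + h (kk j x) (g (K y - kk j y)) + h x (ee j y)"
      using kk_iso[of j x y] by (simp add: h_diffL h_diffR g_diff)
    then have "?D \<in> val_ge v (int m + 1)" using T1 T2 T3 by (simp add: vg_add)
    then show ?thesis by (rule vg_mono[rotated]) (simp add: m_def)
  qed
  then have "?D = 0" by (rule vg_inter)
  then show ?thesis by simp
qed

lemma main_loc: "\<exists>K. Vector_Spaces.linear sc sc K \<and> (\<forall>s x. x \<in> Lam s \<longrightarrow> K x - x \<in> Lam (s + n))
   \<and> (\<forall>x y. h (K x) (g (K y)) = h x y)"
  using K_lin K_id K_iso by blast

end


context hctx begin

lemma basis_ex: "\<exists>B. finite B \<and> independent B \<and> span B = UNIV"
proof -
  obtain B where B: "B \<subseteq> S0" "independent B" "S0 \<subseteq> span B" using maximal_independent_subset by blast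
  have "span S0 \<subseteq> span B" using B(3) by (simp add: span_minimal subspace_span)
  then have "span B = UNIV" using S0(2) by auto
  moreover have "finite B" using B(1) S0(1) finite_subset by blast
  ultimately show ?thesis using B(2) by blast
qed

lemma inj_surj: assumes "Vector_Spaces.linear sc sc T" "inj T" shows "surj T"
proof -
  obtain B where B: "finite B" "independent B" "span B = UNIV" using basis_ex by blast
  interpret fd: finite_dimensional_vector_space sc B by unfold_locales (use B in auto)
  show ?thesis using fd.linear_inj_imp_surj assms by blast
qed

lemma h_sumR: "h x (\<Sum>i\<in>I. f i) = (\<Sum>i\<in>I. h x (f i))"
  by (induction I rule: infinite_finite_induct) (auto simp: h_addR)

lemma adj_ex:
  fixes sc' :: "'a \<Rightarrow> 'w::ab_group_add \<Rightarrow> 'w" and h' :: "'w \<Rightarrow> 'w \<Rightarrow> 'a" and f :: "'v \<Rightarrow> 'w"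
  assumes vs': "vector_space sc'" and fl: "Vector_Spaces.linear sc sc' f"
    and h': "eps_hermitian \<rho> \<epsilon> sc' h'"
  shows "\<exists>G. \<forall>x w. h' (f x) w = h x (G w)"
proof -
  have h'add: "h' (a + b) w = h' a w + h' b w" for a b w using h' unfolding eps_hermitian_def by blast
  have h'sc0: "h' (sc' a x) (sc' b y) = \<rho> a * \<epsilon> * \<rho> (h' y x) * b" for a b x y
    using h' unfolding eps_hermitian_def by blast
  have one': "sc' 1 x = x" for x using vs' unfolding vector_space_def by blast
  have h'sc: "h' (sc' a x) w = \<rho> a * h' x w" for a x w
    using h'sc0[of a x 1 w] h'sc0[of 1 x 1 w] rho_1 one' by simp
  have h'0: "h' 0 w = 0" for w using h'add[of 0 0 w] by (metis add.right_neutral add_left_cancel)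
  have h'sum: "h' (\<Sum>i\<in>I. F i) w = (\<Sum>i\<in>I. h' (F i) w)" for I F w
    by (induction I rule: infinite_finite_induct) (auto simp: h'add h'0)
  have f_sum: "f (\<Sum>i\<in>I. F i) = (\<Sum>i\<in>I. f (F i))" for I F
    by (rule module_hom.sum[OF fl[unfolded linear_iff_module_hom]])
  have f_sc: "f (sc a x) = sc' a (f x)" for a x using fl by (simp add: Vector_Spaces.linear_iff)
  obtain B where B: "finite B" "independent B" "span B = UNIV" using basis_ex by blast
  have rep: "\<exists>r. x = (\<Sum>b\<in>B. sc (r b) b)" for x
  proof -
    have "x \<in> range (\<lambda>u. \<Sum>v\<in>B. sc (u v) v)" using span_finite[OF B(1)] B(3) by simp
    then show ?thesis by blast
  qed
  have indep: "\<And>c b. (\<Sum>b\<in>B. sc (c b) b) = 0 \<Longrightarrow> b \<in> B \<Longrightarrow> c b = 0"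
    using B(2) dependent_finite[OF B(1)] by blast
  define T where "T y = (\<Sum>b\<in>B. sc (h b y) b)" for y
  have Tlin: "Vector_Spaces.linear sc sc T"
    unfolding Vector_Spaces.linear_iff
  proof (intro conjI allI)
    show "vector_space sc" by unfold_locales
    then show "vector_space sc" .
    fix x y show "T (x + y) = T x + T y"
      unfolding T_def by (simp add: h_addR scale_left_distrib sum.distrib)
  next
    fix c x show "T (sc c x) = sc c (T x)"
      unfolding T_def by (simp add: h_scR scale_sum_right mult.commute)
  qed
  have Tdiff: "T (x - y) = T x - T y" for x y
    unfolding T_def by (simp add: h_diffR scale_left_diff_distrib sum_subtractf)
  have hB: "(\<forall>b\<in>B. h b y = h b z) \<Longrightarrow> h x y = h x z" for x y z
  proof -
    assume a: "\<forall>b\<in>B. h b y = h b z"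
    obtain r where r: "x = (\<Sum>b\<in>B. sc (r b) b)" using rep by blast
    show ?thesis unfolding r h_sumL h_scL using a by simp
  qed
  have "inj T"
  proof (rule injI)
    fix y z assume "T y = T z"
    then have "(\<Sum>b\<in>B. sc (h b y - h b z) b) = 0"
      using Tdiff[of y z] unfolding T_def by (simp add: h_diffR[symmetric] scale_left_diff_distrib sum_subtractf)
    then have "\<forall>b\<in>B. h b y = h b z" using indep[of "\<lambda>b. h b y - h b z"] by auto
    then have "h x (y - z) = 0" for x using hB[of y z x] by (simp add: h_diffR)
    then have "y - z = 0" by (rule h_ndR)
    then show "y = z" by simp
  qed
  then have sT: "surj T" using inj_surj Tlin by blast
  have "\<exists>y. \<forall>x. h' (f x) w = h x y" for w
  proof -
    obtain y where y: "(\<Sum>b\<in>B. sc (h' (f b) w) b) = T y" using surjD[OF sT] by blast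
    then have "(\<Sum>b\<in>B. sc (h b y - h' (f b) w) b) = 0"
      unfolding T_def by (simp add: y[symmetric] scale_left_diff_distrib sum_subtractf)
    then have co: "\<forall>b\<in>B. h b y = h' (f b) w" using indep[of "\<lambda>b. h b y - h' (f b) w"] by auto
    show ?thesis
    proof (intro exI allI)
      fix x
      obtain r where r: "x = (\<Sum>b\<in>B. sc (r b) b)" using rep by blast
      have "h' (f x) w = (\<Sum>b\<in>B. \<rho> (r b) * h' (f b) w)"
        unfolding r f_sum f_sc h'sum h'sc by simp
      also have "\<dots> = h x y" unfolding r h_sumL h_scL using co by simp
      finally show "h' (f x) w = h x y" .
    qed
  qed
  then have "\<forall>w. \<exists>y. \<forall>x. h' (f x) w = h x y" by blast
  from choice[OF this] obtain G where "\<forall>w x. h' (f x) w = h x (G w)" by blast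
  then show ?thesis by blast
qed

end


lemma lin_plus_id: assumes "Vector_Spaces.linear s s a" shows "Vector_Spaces.linear s s (\<lambda>x. x + a x)"
proof -
  have vs: "vector_space s" and a: "\<And>x y. a (x + y) = a x + a y" "\<And>c x. a (s c x) = s c (a x)"
    using assms by (auto simp: Vector_Spaces.linear_iff)
  show ?thesis unfolding Vector_Spaces.linear_iff
    using vs a vector_space.vector_space_assms(1)[OF vs] by (auto simp: algebra_simps)
qed

lemma lin_minus_id: assumes "Vector_Spaces.linear s s a" shows "Vector_Spaces.linear s s (\<lambda>x. a x - x)"
proof -
  have vs: "vector_space s" and a: "\<And>x y. a (x + y) = a x + a y" "\<And>c x. a (s c x) = s c (a x)"
    using assms by (auto simp: Vector_Spaces.linear_iff)
  show ?thesis unfolding Vector_Spaces.linear_iff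
    using vs a module.scale_right_diff_distrib[OF vs[folded module_iff_vector_space]] by (auto simp: algebra_simps)
qed

lemma lin_inv: assumes "Vector_Spaces.linear s1 s2 f" "bij f" shows "Vector_Spaces.linear s2 s1 (inv f)"
proof -
  have vs: "vector_space s1" "vector_space s2" and a: "\<And>x y. f (x + y) = f x + f y" "\<And>c x. f (s1 c x) = s2 c (f x)"
    using assms by (auto simp: Vector_Spaces.linear_iff)
  have fi: "f (inv f y) = y" for y using assms(2) by (simp add: bij_is_surj surj_f_inv_f)
  have 1: "inv f (x + y) = inv f x + inv f y" for x y
  proof -
    have "f (inv f x + inv f y) = x + y" using a(1) fi by simp
    then show ?thesis using bij_inv_eq_iff[OF assms(2), of "inv f x + inv f y" "x+y"] by simp
  qed
  have 2: "inv f (s2 c x) = s1 c (inv f x)" for c x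
  proof -
    have "f (s1 c (inv f x)) = s2 c x" using a(2) fi by simp
    then show ?thesis using bij_inv_eq_iff[OF assms(2), of "s1 c (inv f x)" "s2 c x"] by simp
  qed
  show ?thesis unfolding Vector_Spaces.linear_iff using vs 1 2 by blast
qed

theorem corollary3p2:
  fixes v :: "'a::field \<Rightarrow> int" and rho :: "'a \<Rightarrow> 'a" and eps :: 'a
    and sc :: "'a \<Rightarrow> 'v::ab_group_add \<Rightarrow> 'v" and h :: "'v \<Rightarrow> 'v \<Rightarrow> 'a"
    and sc' :: "'a \<Rightarrow> 'w::ab_group_add \<Rightarrow> 'w" and h' :: "'w \<Rightarrow> 'w \<Rightarrow> 'a"
    and n :: nat and Lam :: "int \<Rightarrow> 'v set" and f :: "'v \<Rightarrow> 'w"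
  assumes F: "nonarch_local_field v" "odd_residual_char v"
    and rho: "field_automorphism rho" "\<forall>x. rho (rho x) = x"
             "\<forall>x. x \<noteq> 0 \<longrightarrow> v (rho x) = v x"
    and eps: "eps = 1 \<or> eps = -1"
    and V: "finite_dim_space sc" "eps_hermitian rho eps sc h"
    and V': "finite_dim_space sc'" "eps_hermitian rho eps sc' h'"
    and n: "n > 0"
    and Lam: "self_dual_lattice_sequence v sc h Lam"
    and f: "Vector_Spaces.linear sc sc' f" "bij f"
    and fLam: "self_dual_lattice_sequence v sc' h' (\<lambda>s. f ` Lam s)"
    and sig: "\<exists>u\<in>U_tilde sc Lam (int n). \<exists>u'\<in>U_tilde sc' (\<lambda>s. f ` Lam s) (int n).
                sigma_adj h h' f = u \<circ> inv f \<circ> u'"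
  shows "\<exists>phi. isometry sc sc' h h' phi \<and>
           (\<exists>u'\<in>U_tilde sc' (\<lambda>s. f ` Lam s) (int n). \<exists>u\<in>U_tilde sc Lam (int n).
              phi = u' \<circ> f \<circ> u)"
proof -
  have dv: "discrete_valuation v" and vc: "val_complete v" using F(1) unfolding nonarch_local_field_def by auto
  have two: "(2::'a) \<notin> val_ideal v" using F(2) unfolding odd_residual_char_def .
  have vs: "vector_space sc" using V(1) unfolding finite_dim_space_def by blast
  have vs': "vector_space sc'" using V'(1) unfolding finite_dim_space_def by blast
  have ls: "lattice_sequence v sc Lam" and "\<exists>u. \<forall>s. lattice_dual v h (Lam s) = Lam (u - s)"
    using Lam unfolding self_dual_lattice_sequence_def by auto
  then obtain u where dual: "\<forall>s. lattice_dual v h (Lam s) = Lam (u - s)" by blast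
  have lat: "\<forall>s. o_lattice v sc (Lam s)" and mono: "\<forall>s t. s > t \<longrightarrow> Lam s \<subseteq> Lam t"
    using ls unfolding lattice_sequence_def by auto
  obtain e p where ep: "e \<ge> 1" "p \<noteq> 0" "v p = 1" "\<forall>s. sc p ` Lam s = Lam (s + e)"
    using ls unfolding lattice_sequence_def by blast
  obtain S0 where S0: "finite S0" "module.span sc S0 = UNIV" "Lam 0 = o_span v sc S0"
    using lat unfolding o_lattice_def by blast
  have "hctx v sc rho eps h Lam p e u S0"
    unfolding hctx_def hctx_axioms_def dval_def
    using dv vs vc two rho eps V(2) lat mono ep dual S0 by auto
  then interpret H: hctx v sc rho eps h Lam p e u S0 .
  obtain G where G: "\<forall>x w. h' (f x) w = h x (G w)" using H.adj_ex[OF vs' f(1) V'(2)] by blast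
  have sG: "sigma_adj h h' f = G"
    unfolding sigma_adj_def
  proof (rule the_equality)
    show "\<forall>x w. h' (f x) w = h x (G w)" by fact
  next
    fix G' assume G': "\<forall>x w. h' (f x) w = h x (G' w)"
    show "G' = G"
    proof
      fix w
      have "h x (G' w - G w) = 0" for x using G G' by (simp add: H.h_diffR)
      then have "G' w - G w = 0" by (rule H.h_ndR)
      then show "G' w = G w" by simp
    qed
  qed
  from sig obtain u1 u2 where u1: "u1 \<in> U_tilde sc Lam (int n)"
    and u2: "u2 \<in> U_tilde sc' (\<lambda>s. f ` Lam s) (int n)" and Gu: "G = u1 \<circ> inv f \<circ> u2"
    using sG by auto
  obtain a1 where a1: "u1 = (\<lambda>x. x + a1 x)" "Vector_Spaces.linear sc sc a1"
    "\<forall>s. a1 ` Lam s \<subseteq> Lam (s + int n)"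
    using u1 unfolding U_tilde_def a_n_def by blast
  obtain a2 where a2: "u2 = (\<lambda>x. x + a2 x)" "Vector_Spaces.linear sc' sc' a2"
    "\<forall>s. a2 ` f ` Lam s \<subseteq> f ` Lam (s + int n)"
    using u2 unfolding U_tilde_def a_n_def by blast
  have h'sc0: "h' (sc' a x) (sc' b y) = rho a * eps * rho (h' y x) * b" for a b x y
    using V'(2) unfolding eps_hermitian_def by blast
  have one': "sc' 1 x = x" for x using vs' unfolding vector_space_def by blast
  have h'sym: "h' x y = eps * rho (h' y x)" for x y using h'sc0[of 1 x 1 y] one' H.rho_1 by simp
  have f_add: "f (x + y) = f x + f y" for x y using f(1) by (simp add: Vector_Spaces.linear_iff)
  have a1_add: "a1 (x + y) = a1 x + a1 y" for x y using a1(2) by (simp add: Vector_Spaces.linear_iff)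
  define g where "g x = G (f x)" for x
  have g_lin: "Vector_Spaces.linear sc sc g"
  proof -
    have "g = u1 \<circ> (inv f \<circ> (u2 \<circ> f))" unfolding g_def Gu by auto
    moreover have "Vector_Spaces.linear sc sc (u1 \<circ> (inv f \<circ> (u2 \<circ> f)))"
    proof -
      have l1: "Vector_Spaces.linear sc sc u1" using lin_plus_id[OF a1(2)] a1(1) by simp
      have l2: "Vector_Spaces.linear sc' sc' u2" using lin_plus_id[OF a2(2)] a2(1) by simp
      have l3: "Vector_Spaces.linear sc sc' (u2 \<circ> f)" by (rule Vector_Spaces.linear_compose[OF f(1) l2])
      have l4: "Vector_Spaces.linear sc sc (inv f \<circ> (u2 \<circ> f))" by (rule Vector_Spaces.linear_compose[OF l3 lin_inv[OF f]])
      show ?thesis by (rule Vector_Spaces.linear_compose[OF l4 l1])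
    qed
    ultimately show ?thesis by simp
  qed
  have g_sa: "\<forall>x y. h (g x) y = h x (g y)"
  proof (intro allI)
    fix x y
    have "h (g x) y = eps * rho (h y (g x))" by (rule H.hsym)
    also have "\<dots> = eps * rho (h' (f y) (f x))" unfolding g_def using G by simp
    also have "\<dots> = h' (f x) (f y)" by (rule h'sym[symmetric])
    also have "\<dots> = h x (g y)" unfolding g_def using G by simp
    finally show "h (g x) y = h x (g y)" .
  qed
  have g_maps: "\<forall>s x. x \<in> Lam s \<longrightarrow> g x - x \<in> Lam (s + int n)"
  proof (intro allI impI)
    fix s x assume x: "x \<in> Lam s"
    have "a2 (f x) \<in> f ` Lam (s + int n)" using a2(3) x by blast
    then obtain z where z: "z \<in> Lam (s + int n)" "a2 (f x) = f z" by blast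
    have "inv f (u2 (f x)) = x + z" unfolding a2(1) z(2) f_add[symmetric]
      using f(2) by (simp add: bij_is_inj inv_f_f)
    then have gx: "g x = x + z + a1 (x + z)" unfolding g_def Gu a1(1) by simp
    have zs: "z \<in> Lam s" using H.L_mono[OF _ z(1)] n by simp
    have "a1 (x + z) \<in> Lam (s + int n)" using a1(3) H.L_add[OF x zs] by blast
    then have "z + a1 (x + z) \<in> Lam (s + int n)" using z(1) H.L_add by blast
    then show "g x - x \<in> Lam (s + int n)" unfolding gx by (simp add: algebra_simps)
  qed
  have "hctx2 v sc rho eps h Lam p e u S0 g (int n)"
    unfolding hctx2_def hctx2_axioms_def
    using H.hctx_axioms g_lin g_sa g_maps n by auto
  then interpret H2: hctx2 v sc rho eps h Lam p e u S0 g "int n" .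
  obtain K where K: "Vector_Spaces.linear sc sc K" "\<forall>s x. x \<in> Lam s \<longrightarrow> K x - x \<in> Lam (s + int n)"
    "\<forall>x y. h (K x) (g (K y)) = h x y"
    using H2.main_loc by blast
  have K_diff: "K (x - y) = K x - K y" for x y
    using K(1) by (simp add: Vector_Spaces.linear_iff_module_hom module_hom.diff)
  have K0: "K 0 = 0" using K_diff[of 0 0] by simp
  have "inj K"
  proof (rule injI)
    fix x y assume "K x = K y"
    then have "K (x - y) = 0" by (simp add: K_diff)
    then have "\<forall>z. h (x - y) z = 0" using K(3) H.h_0L by (metis (no_types))
    then have "x - y = 0" by (rule H.h_nd)
    then show "x = y" by simp
  qed
  moreover have "surj K" using H.inj_surj[OF K(1) \<open>inj K\<close>] .
  ultimately have bK: "bij K" by (simp add: bij_def)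
  define phi where "phi = f \<circ> K"
  have iso: "isometry sc sc' h h' phi"
    unfolding isometry_def phi_def
  proof (intro conjI allI)
    show "Vector_Spaces.linear sc sc' (f \<circ> K)" using Vector_Spaces.linear_compose[OF K(1) f(1)] .
    show "bij (f \<circ> K)" using bij_comp[OF bK f(2)] .
    fix x y
    show "h' ((f \<circ> K) x) ((f \<circ> K) y) = h x y"
      using G K(3) unfolding g_def by simp
  qed
  have U1: "(\<lambda>x. x + (\<lambda>_. 0) x) \<in> U_tilde sc' (\<lambda>s. f ` Lam s) (int n)"
    unfolding U_tilde_def a_n_def
  proof (intro CollectI exI conjI)
    show "Vector_Spaces.linear sc' sc' (\<lambda>_::'w. 0::'w)"
      using vs' module.scale_zero_right[OF vs'[folded module_iff_vector_space]] by (simp add: Vector_Spaces.linear_iff)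
    have "f 0 = 0" using f(1) by (simp add: Vector_Spaces.linear_iff_module_hom module_hom.zero)
    then show "\<forall>s. (\<lambda>_. 0) ` f ` Lam s \<subseteq> f ` Lam (s + int n)"
    proof (intro allI subsetI)
      fix s and z :: 'w assume "z \<in> (\<lambda>_. 0) ` f ` Lam s"
      then have "z = f 0" using \<open>f 0 = 0\<close> by auto
      then show "z \<in> f ` Lam (s + int n)" using H.L_0 by blast
    qed
  qed (rule refl)
  have U2: "(\<lambda>x. x + (\<lambda>x. K x - x) x) \<in> U_tilde sc Lam (int n)"
    unfolding U_tilde_def a_n_def
  proof (intro CollectI exI conjI)
    show "Vector_Spaces.linear sc sc (\<lambda>x. K x - x)" using lin_minus_id[OF K(1)] .
    show "\<forall>s. (\<lambda>x. K x - x) ` Lam s \<subseteq> Lam (s + int n)" using K(2) by blast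
  qed (rule refl)
  have "phi = (\<lambda>x. x + (\<lambda>_. 0) x) \<circ> f \<circ> (\<lambda>x. x + (\<lambda>x. K x - x) x)"
    unfolding phi_def by auto
  then show ?thesis using iso U1 U2 by blast
qed


end
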